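(* Let $d,l\in\mathbb{N}$, let $\gamma\colon[0,1]\to(0,1)^d$ be the length parameterisation of a line segment, let $\mathcal{P}$ be a dense subset of $\operatorname{Lip}_1([0,1],\mathbb{R})$, $t_0\in(0,1)$, let $f=(f_1,\ldots,f_l)\in\operatorname{Lip}_1([0,1]^d,\mathbb{R}^l)$ with $\operatorname{Lip}(f)<1$, $\varepsilon\in(0,1)$ and $j\in\{1,\ldots,l\}$. Then there exist $p\in\mathcal{P}$, $\eta>0$ and $g=(g_1,\ldots,g_l)\in\operatorname{Lip}_1([0,1]^d,\mathbb{R}^l)$ such that: (i) $\|g(x)-f(x)\|\leq\varepsilon$ for all $x\in[0,1]^d$; (ii) $g_j(\gamma(t))=p(t)$ for all $t\in(t_0-\eta,t_0+\eta)\cap[0,1]$; (iii) if $l=1$, then $g_1\circ\gamma=p$ on $[0,1]$.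
   Context: $\operatorname{Lip}_1([0,1]^d,\mathbb{R}^l)$ is the space of mappings $[0,1]^d\to\mathbb{R}^l$ with Lipschitz constant at most $1$, with the supremum metric. A length parameterisation of a line segment is a map $\gamma(t)=a+tv$ with $\|v\|=1$. *)

theory Defs
  imports "HOL-Analysis.Analysis"
begin

text \<open>Lip_1(K, Y): maps defined (at least) on K with Lipschitz constant at most 1 on K.
  Functions are total HOL functions; only their values on K matter.\<close>
definition Lip1 :: "'a::metric_space set \<Rightarrow> ('a \<Rightarrow> 'b::metric_space) set" where
  "Lip1 K = {f. 1-lipschitz_on K f}"

definition dense_in_Lip1_unit :: "(real \<Rightarrow> real) set \<Rightarrow> bool" where
  "dense_in_Lip1_unit P \<longleftrightarrow> P \<subseteq> Lip1 {0..1} \<and>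
     (\<forall>h \<in> Lip1 {0..1}. \<forall>e>0. \<exists>p\<in>P. (SUP t\<in>{0..1}. \<bar>p t - h t\<bar>) < e)"

end

theory Submission
  imports Defs
begin


definition shr :: "real \<Rightarrow> 'a::real_inner \<Rightarrow> 'a" where
  "shr r u = (if norm u \<le> r then 0 else (1 - r / norm u) *\<^sub>R u)"

lemma shr_out_sq:
  fixes a b r c :: real
  assumes "r > 0" "a > r" "b > r" "c \<le> 1"
  shows "(a-r)^2 + (b-r)^2 - 2*(a-r)*(b-r)*c \<le> a^2 + b^2 - 2*c*a*b"
proof -
  have "a^2 + b^2 - 2*c*a*b - ((a-r)^2 + (b-r)^2 - 2*(a-r)*(b-r)*c) = 2*r*(a+b-r)*(1-c)"
    by (simp add: algebra_simps power2_eq_square)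
  moreover have "2*r*(a+b-r)*(1-c) \<ge> 0" using assms by simp
  ultimately show ?thesis by linarith
qed

lemma gen_exp:
  fixes u w :: "'a::real_inner"
  shows "inner (x *\<^sub>R u - y *\<^sub>R w) (x *\<^sub>R u - y *\<^sub>R w) = x^2 * inner u u + y^2 * inner w w - 2*x*y*(inner u w)"
  by (simp add: inner_diff_left inner_diff_right inner_commute power2_eq_square)

lemma gen_exp2:
  fixes u w :: "'a::real_inner"
  shows "inner (u - w) (u - w) = inner u u + inner w w - 2*(inner u w)"
  by (simp add: inner_diff_left inner_diff_right inner_commute)

lemma shr_lip:
  fixes u w :: "'a::real_inner"
  assumes r: "r > 0"
  shows "norm (shr r u - shr r w) \<le> norm (u - w)"
proof (cases "norm u \<le> r")
  case True
  show ?thesis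
  proof (cases "norm w \<le> r")
    case True
    with \<open>norm u \<le> r\<close> show ?thesis by (simp add: shr_def)
  next
    case False
    have nw: "norm w > 0" "r / norm w \<le> 1" using False r by (auto simp: divide_le_eq_1)
    have "norm (shr r u - shr r w) = \<bar>1 - r / norm w\<bar> * norm w"
      using True False r by (simp add: shr_def)
    also have "\<dots> = norm w - r" using nw by (simp add: abs_of_nonneg field_simps)
    also have "\<dots> \<le> norm w - norm u" using True by simp
    also have "\<dots> \<le> norm (u - w)" by (metis norm_minus_commute norm_triangle_ineq2)
    finally show ?thesis .
  qed
next
  case False
  show ?thesis
  proof (cases "norm w \<le> r")
    case True
    have nw: "norm u > 0" "r / norm u \<le> 1" using False r by (auto simp: divide_le_eq_1)
    have "norm (shr r u - shr r w) = \<bar>1 - r / norm u\<bar> * norm u"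
      using True False r by (simp add: shr_def)
    also have "\<dots> = norm u - r" using nw by (simp add: abs_of_nonneg field_simps)
    also have "\<dots> \<le> norm u - norm w" using True by simp
    also have "\<dots> \<le> norm (u - w)" by (metis norm_triangle_ineq2)
    finally show ?thesis .
  next
    case False2: False
    define A where "A = norm u"
    define B where "B = norm w"
    have A: "A > r" and B: "B > r" using False False2 by (auto simp: A_def B_def)
    define c where "c = inner u w / (A * B)"
    have c1: "c \<le> 1"
    proof -
      have "inner u w \<le> A * B" unfolding A_def B_def by (rule norm_cauchy_schwarz)
      then show ?thesis using A B r unfolding c_def by simp
    qed
    have k: "inner u w = c * A * B" using A B r unfolding c_def by simp
    have e: "shr r u - shr r w = (1 - r / A) *\<^sub>R u - (1 - r / B) *\<^sub>R w"
      using False False2 by (simp add: shr_def A_def B_def)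
    have uu: "inner u u = A^2" unfolding A_def by (simp add: power2_norm_eq_inner)
    have ww: "inner w w = B^2" unfolding B_def by (simp add: power2_norm_eq_inner)
    have "(norm (shr r u - shr r w))^2 = (1 - r/A)^2 * inner u u + (1 - r/B)^2 * inner w w - 2*(1-r/A)*(1-r/B)*(inner u w)"
      unfolding e power2_norm_eq_inner
      by (rule gen_exp)
    also have "\<dots> = (1 - r/A)^2 * A^2 + (1 - r/B)^2 * B^2 - 2*(1-r/A)*(1-r/B)*(c*A*B)"
      by (simp only: uu ww k)
    also have "\<dots> = ((1-r/A)*A)^2 + ((1-r/B)*B)^2 - 2*((1-r/A)*A)*((1-r/B)*B)*c"
      by (simp add: power_mult_distrib mult_ac)
    also have "\<dots> = (A-r)^2 + (B-r)^2 - 2*(A-r)*(B-r)*c"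
    proof -
      have a1: "(1 - r/A) * A = A - r" using A r by (simp add: field_simps)
      have b1: "(1 - r/B) * B = B - r" using B r by (simp add: field_simps)
      show ?thesis by (simp only: a1 b1)
    qed
    also have "\<dots> \<le> A^2 + B^2 - 2*c*A*B" by (rule shr_out_sq[OF r A B c1])
    also have "\<dots> = (norm (u - w))^2"
      unfolding power2_norm_eq_inner gen_exp2 uu ww k by simp
    finally have "(norm (shr r u - shr r w))^2 \<le> (norm (u - w))^2" .
    then show ?thesis by (rule power2_le_imp_le) simp
  qed
qed


lemma clamp_lip:
  fixes lo hi q lo' hi' q' :: real
  shows "\<bar>max lo (min hi q) - max lo' (min hi' q')\<bar> \<le> max (max \<bar>lo - lo'\<bar> \<bar>hi - hi'\<bar>) \<bar>q - q'\<bar>"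
  by (simp add: max_def min_def abs_if split: if_splits)

lemma max0_lip:
  fixes r d e :: real
  shows "\<bar>max 0 (r - d) - max 0 (r - e)\<bar> \<le> \<bar>d - e\<bar>"
  by (simp add: max_def abs_if)

lemma clamp_bound:
  fixes h q :: real
  shows "0 \<le> h \<Longrightarrow> \<bar>max (- h) (min h q)\<bar> \<le> h"
  by (simp add: max_def min_def abs_if)

lemma clamp_id:
  fixes h q :: real
  shows "\<bar>q\<bar> \<le> h \<Longrightarrow> max (- h) (min h q) = q"
  unfolding max_def min_def by (auto simp: abs_if split: if_splits)

lemma norm_card1:
  fixes z :: "real ^ 'l"
  assumes "CARD('l) = 1"
  shows "norm z = \<bar>z $ j\<bar>"
proof -
  obtain k where k: "(UNIV :: 'l set) = {k}" using assms by (rule card_1_singletonE)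
  have "j = k" using k by (metis UNIV_I singletonD)
  with k have U: "UNIV = {j}" by simp
  have "norm z = sqrt (\<Sum>i\<in>UNIV. (z $ i)\<^sup>2)" by (simp add: norm_vec_def L2_set_def)
  also have "\<dots> = sqrt (\<Sum>i\<in>{j}. (z $ i)\<^sup>2)" by (simp only: U)
  finally show ?thesis by simp
qed

lemma sup_bound:
  fixes p h :: "real \<Rightarrow> real"
  assumes p: "p \<in> Lip1 {0..1}" and h: "h \<in> Lip1 {0..1}"
    and s: "(SUP t\<in>{0..1}. \<bar>p t - h t\<bar>) < e" and t: "t \<in> {0..1}"
  shows "\<bar>p t - h t\<bar> < e"
proof -
  have pl: "\<bar>p x - p y\<bar> \<le> \<bar>x - y\<bar>" if "x \<in> {0..1}" "y \<in> {0..1}" for x y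
    using lipschitz_onD[OF p[unfolded Lip1_def, simplified] that] by (simp add: dist_real_def)
  have hl: "\<bar>h x - h y\<bar> \<le> \<bar>x - y\<bar>" if "x \<in> {0..1}" "y \<in> {0..1}" for x y
    using lipschitz_onD[OF h[unfolded Lip1_def, simplified] that] by (simp add: dist_real_def)
  have "bdd_above ((\<lambda>t. \<bar>p t - h t\<bar>) ` {0..1})"
  proof (rule bdd_aboveI2)
    fix x :: real assume x: "x \<in> {0..1}"
    have "\<bar>p x - p 0\<bar> \<le> 1" "\<bar>h x - h 0\<bar> \<le> 1" using pl[OF x, of 0] hl[OF x, of 0] x by auto
    then show "\<bar>p x - h x\<bar> \<le> \<bar>p 0 - h 0\<bar> + 2" by linarith
  qed
  then have "\<bar>p t - h t\<bar> \<le> (SUP t\<in>{0..1}. \<bar>p t - h t\<bar>)" by (rule cSUP_upper[OF t])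
  with s show ?thesis by linarith
qed

theorem lemma6p2:
  fixes a v :: "real ^ 'd"
    and P :: "(real \<Rightarrow> real) set"
    and t0 \<epsilon> :: real
    and f :: "real ^ 'd \<Rightarrow> real ^ 'l"
    and j :: 'l
  assumes v_unit: "norm v = 1"
    and gamma_in: "\<forall>t\<in>{0..1}. a + t *\<^sub>R v \<in> box 0 1"
    and P_dense: "dense_in_Lip1_unit P"
    and t0: "t0 \<in> {0<..<1}"
    and f_Lip1: "f \<in> Lip1 (cbox 0 1)"
    and f_Lip_lt1: "\<exists>L<1. L-lipschitz_on (cbox 0 1) f"
    and eps: "\<epsilon> \<in> {0<..<1}"
  shows "\<exists>p\<in>P. \<exists>\<eta>>0. \<exists>g\<in>Lip1 (cbox 0 1).
           (\<forall>x\<in>cbox 0 1. norm (g x - f x) \<le> \<epsilon>) \<and>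
           (\<forall>t\<in>{t0-\<eta><..<t0+\<eta>} \<inter> {0..1}. g (a + t *\<^sub>R v) $ j = p t) \<and>
           (CARD('l) = 1 \<longrightarrow> (\<forall>t\<in>{0..1}. g (a + t *\<^sub>R v) $ j = p t))"
proof -
  have e0: "\<epsilon> > 0" using eps by simp
  have fL: "norm (f x - f y) \<le> norm (x - y)" if "x \<in> cbox 0 1" "y \<in> cbox 0 1" for x y
    using lipschitz_onD[OF f_Lip1[unfolded Lip1_def, simplified] that] by (simp add: dist_norm)
  have fLj: "\<bar>f x $ i - f y $ i\<bar> \<le> norm (x - y)" if "x \<in> cbox 0 1" "y \<in> cbox 0 1" for x y i
    using component_le_norm_cart[of "f x - f y" i] fL[OF that] by simp
  have gc: "a + t *\<^sub>R v \<in> cbox 0 1" if "t \<in> {0..1}" for t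
    using gamma_in that box_subset_cbox by blast
  have Psub: "P \<subseteq> Lip1 {0..1}" and Pd: "\<And>h e. h \<in> Lip1 {0..1} \<Longrightarrow> e > 0 \<Longrightarrow> \<exists>p\<in>P. (SUP t\<in>{0..1}. \<bar>p t - h t\<bar>) < e"
    using P_dense unfolding dense_in_Lip1_unit_def by auto
  define pr where "pr x = max 0 (min 1 (inner (x - a) v))" for x
  have vv: "inner v v = 1" using v_unit by (simp add: power2_norm_eq_inner[symmetric])
  have pr_g: "pr (a + t *\<^sub>R v) = t" if "t \<in> {0..1}" for t
    using that vv by (simp add: pr_def)
  have pr_in: "pr x \<in> {0..1}" for x by (simp add: pr_def)
  have pr_l: "\<bar>pr x - pr y\<bar> \<le> norm (x - y)" for x y
  proof -
    have "\<bar>inner (x - a) v - inner (y - a) v\<bar> = \<bar>inner (x - y) v\<bar>" by (simp add: inner_diff_left)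
    also have "\<dots> \<le> norm (x - y) * norm v" by (rule Cauchy_Schwarz_ineq2)
    finally have "\<bar>inner (x - a) v - inner (y - a) v\<bar> \<le> norm (x - y)" using v_unit by simp
    moreover have "\<bar>pr x - pr y\<bar> \<le> max (max \<bar>0 - 0\<bar> \<bar>1 - 1\<bar>) \<bar>inner (x - a) v - inner (y - a) v\<bar>"
      unfolding pr_def by (rule clamp_lip)
    ultimately show ?thesis by simp
  qed
  have pl: "\<bar>p x - p y\<bar> \<le> \<bar>x - y\<bar>" if "p \<in> P" "x \<in> {0..1}" "y \<in> {0..1}" for p x y
    using lipschitz_onD[OF Psub[THEN subsetD, OF that(1), unfolded Lip1_def, simplified] that(2,3)]
    by (simp add: dist_real_def)
  have ppl: "\<bar>p (pr x) - p (pr y)\<bar> \<le> norm (x - y)" if "p \<in> P" for p x y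
    using pl[OF that pr_in[of x] pr_in[of y]] pr_l[of x y] by linarith
  have gd: "norm ((a + s *\<^sub>R v) - (a + t *\<^sub>R v)) = \<bar>s - t\<bar>" for s t
  proof -
    have "(a + s *\<^sub>R v) - (a + t *\<^sub>R v) = (s - t) *\<^sub>R v" by (simp add: algebra_simps)
    then show ?thesis using v_unit by simp
  qed
  show ?thesis
  proof (cases "CARD('l) = 1")
    case True
    define h where "h t = f (a + t *\<^sub>R v) $ j" for t
    have hL: "h \<in> Lip1 {0..1}" unfolding Lip1_def
    proof (simp, rule lipschitz_onI)
      fix s t :: real assume "s \<in> {0..1}" "t \<in> {0..1}"
      then show "dist (h s) (h t) \<le> 1 * dist s t"
        using fLj[OF gc gc, of s t j] gd[of s t] by (simp add: h_def dist_real_def)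
    qed simp
    obtain p where pP: "p \<in> P" and ps: "(SUP t\<in>{0..1}. \<bar>p t - h t\<bar>) < \<epsilon>"
      using Pd[OF hL e0] by blast
    have pt: "\<bar>p t - h t\<bar> < \<epsilon>" if "t \<in> {0..1}" for t
      using sup_bound[OF Psub[THEN subsetD, OF pP] hL ps that] .
    define g where "g x = (\<chi> i. max (f x $ i - \<epsilon>) (min (f x $ i + \<epsilon>) (p (pr x))))" for x
    have gj: "g x $ j = max (f x $ j - \<epsilon>) (min (f x $ j + \<epsilon>) (p (pr x)))" for x
      by (simp add: g_def)
    have gLip: "g \<in> Lip1 (cbox 0 1)" unfolding Lip1_def
    proof (simp, rule lipschitz_onI)
      fix x y :: "real ^ 'd" assume xy: "x \<in> cbox 0 1" "y \<in> cbox 0 1"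
      have "dist (g x) (g y) = \<bar>g x $ j - g y $ j\<bar>"
        using norm_card1[OF True, of "g x - g y" j] by (simp add: dist_norm)
      also have "\<dots> \<le> max (max \<bar>(f x $ j - \<epsilon>) - (f y $ j - \<epsilon>)\<bar> \<bar>(f x $ j + \<epsilon>) - (f y $ j + \<epsilon>)\<bar>) \<bar>p (pr x) - p (pr y)\<bar>"
        unfolding gj by (rule clamp_lip)
      also have "\<dots> \<le> dist x y"
        using fLj[OF xy, of j] ppl[OF pP, of x y] by (simp add: dist_norm)
      finally show "dist (g x) (g y) \<le> 1 * dist x y" by simp
    qed simp
    have close: "norm (g x - f x) \<le> \<epsilon>" for x
      using norm_card1[OF True, of "g x - f x" j] e0 unfolding g_def
      by (simp add: max_def min_def abs_if)
    have eq: "g (a + t *\<^sub>R v) $ j = p t" if "t \<in> {0..1}" for t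
      using pt[OF that] unfolding gj pr_g[OF that] h_def
      by (simp add: max_def min_def abs_if split: if_splits)
    show ?thesis
      using pP gLip close eq by (intro bexI[of _ p] exI[of _ 1]) (auto intro!: bexI[of _ g])
  next
    case False
    define x0 where "x0 = a + t0 *\<^sub>R v"
    have x0c: "x0 \<in> cbox 0 1" unfolding x0_def using gc t0 by simp
    define r where "r = \<epsilon> / 2"
    have r0: "r > 0" using e0 by (simp add: r_def)
    define c where "c = f x0 $ j"
    have cL: "(\<lambda>t. c) \<in> Lip1 {0..1}" unfolding Lip1_def
      by (auto simp: lipschitz_on_def)
    obtain p where pP: "p \<in> P" and ps: "(SUP t\<in>{0..1}. \<bar>p t - c\<bar>) < r / 2"
      using Pd[OF cL, of "r/2"] r0 by auto
    have pt0: "\<bar>p t0 - c\<bar> < r / 2"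
      using sup_bound[OF Psub[THEN subsetD, OF pP] cL ps] t0 by simp
    define rho where "rho x = x0 + shr r (x - x0)" for x
    define hh where "hh x = max 0 (r - norm (x - x0))" for x
    define psi where "psi x = max (- hh x) (min (hh x) (p (pr x) - c))" for x
    define g where "g x = f (rho x) + psi x *\<^sub>R axis j 1" for x
    have rho_in: "rho x \<in> cbox 0 1" if "x \<in> cbox 0 1" for x
    proof (cases "norm (x - x0) \<le> r")
      case True then show ?thesis using x0c by (simp add: rho_def shr_def)
    next
      case F: False
      define l where "l = 1 - r / norm (x - x0)"
      have l: "0 \<le> l" "l \<le> 1" using F r0 by (auto simp: l_def divide_le_eq_1)
      have "rho x = (1 - l) *\<^sub>R x0 + l *\<^sub>R x"
        using F by (simp add: rho_def shr_def l_def[symmetric] algebra_simps)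
      also have "\<dots> \<in> cbox 0 1"
        by (rule convexD[OF convex_box(1) x0c that]) (use l in auto)
      finally show ?thesis .
    qed
    have rho_near: "rho x = x0" if "norm (x - x0) \<le> r" for x
      using that by (simp add: rho_def shr_def)
    have rho_far: "norm (rho x - x0) \<le> norm (x - x0) - r" if "norm (x - x0) > r" for x
    proof -
      have n: "norm (x - x0) > 0" "r / norm (x - x0) \<le> 1" using that r0 by (auto simp: divide_le_eq_1)
      have "norm (rho x - x0) = \<bar>1 - r / norm (x - x0)\<bar> * norm (x - x0)"
        using that by (simp add: rho_def shr_def)
      also have "\<dots> = norm (x - x0) - r" using n by (simp add: abs_of_nonneg field_simps)
      finally show ?thesis by simp
    qed
    have rho_dist: "norm (rho x - x) \<le> r" for x
    proof (cases "norm (x - x0) \<le> r")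
      case True then show ?thesis by (simp add: rho_near norm_minus_commute)
    next
      case F: False
      have n: "norm (x - x0) > 0" "r / norm (x - x0) \<le> 1" using F r0 by (auto simp: divide_le_eq_1)
      have "rho x - x = - ((r / norm (x - x0)) *\<^sub>R (x - x0))"
        using F by (simp add: rho_def shr_def algebra_simps)
      then have "norm (rho x - x) = r / norm (x - x0) * norm (x - x0)" using r0 by simp
      also have "\<dots> = r" using n by simp
      finally show ?thesis by simp
    qed
    have rho_lip: "norm (rho x - rho y) \<le> norm (x - y)" for x y
      using shr_lip[OF r0, of "x - x0" "y - x0"] by (simp add: rho_def)
    have hh_le: "hh x \<le> r" and hh_ge: "0 \<le> hh x" for x using r0 by (auto simp: hh_def)
    have hh_l: "\<bar>hh x - hh y\<bar> \<le> norm (x - y)" for x y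
    proof -
      have "\<bar>norm (x - x0) - norm (y - x0)\<bar> \<le> norm ((x - x0) - (y - x0))" by (rule norm_triangle_ineq3)
      then have "\<bar>norm (x - x0) - norm (y - x0)\<bar> \<le> norm (x - y)" by simp
      then show ?thesis unfolding hh_def using max0_lip[of r "norm (x - x0)" "norm (y - x0)"] by linarith
    qed
    have psi_b: "\<bar>psi x\<bar> \<le> hh x" for x
      using clamp_bound[OF hh_ge[of x]] by (simp add: psi_def)
    have psi_l: "\<bar>psi x - psi y\<bar> \<le> norm (x - y)" for x y
    proof -
      have "\<bar>psi x - psi y\<bar> \<le> max (max \<bar>- hh x - - hh y\<bar> \<bar>hh x - hh y\<bar>) \<bar>(p (pr x) - c) - (p (pr y) - c)\<bar>"
        unfolding psi_def by (rule clamp_lip)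
      then show ?thesis using hh_l[of x y] ppl[OF pP, of x y] by simp
    qed
    have gdiff: "norm (g x - g y) \<le> norm (f (rho x) - f (rho y)) + \<bar>psi x - psi y\<bar>" for x y
    proof -
      have "g x - g y = (f (rho x) - f (rho y)) + (psi x - psi y) *\<^sub>R axis j 1"
        by (simp add: g_def algebra_simps)
      then show ?thesis by (metis norm_triangle_ineq norm_scaleR norm_axis_1 mult.right_neutral real_norm_def)
    qed
    have mixed: "norm (f (rho x) - f (rho y)) + \<bar>psi x - psi y\<bar> \<le> norm (x - y)"
      if xy: "x \<in> cbox 0 1" "y \<in> cbox 0 1" and nx: "norm (x - x0) \<le> r" and ny: "norm (y - x0) > r" for x y
    proof -
      have "norm (f (rho x) - f (rho y)) \<le> norm (rho x - rho y)" by (rule fL[OF rho_in[OF xy(1)] rho_in[OF xy(2)]])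
      also have "\<dots> = norm (rho y - x0)" using rho_near[OF nx] by (simp add: norm_minus_commute)
      also have "\<dots> \<le> norm (y - x0) - r" by (rule rho_far[OF ny])
      finally have A: "norm (f (rho x) - f (rho y)) \<le> norm (y - x0) - r" .
      have "hh y = 0" using ny by (simp add: hh_def)
      then have "psi y = 0" using psi_b[of y] by simp
      then have B: "\<bar>psi x - psi y\<bar> \<le> r - norm (x - x0)" using psi_b[of x] nx by (simp add: hh_def)
      have "norm (y - x0) - norm (x - x0) \<le> norm ((y - x0) - (x - x0))" by (rule norm_triangle_ineq2)
      then have "norm (y - x0) - norm (x - x0) \<le> norm (x - y)" by (simp add: norm_minus_commute)
      with A B show ?thesis by linarith
    qed
    have gLip: "g \<in> Lip1 (cbox 0 1)" unfolding Lip1_def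
    proof (simp, rule lipschitz_onI)
      fix x y :: "real ^ 'd" assume xy: "x \<in> cbox 0 1" "y \<in> cbox 0 1"
      have "norm (f (rho x) - f (rho y)) + \<bar>psi x - psi y\<bar> \<le> norm (x - y)"
      proof (cases "norm (x - x0) \<le> r")
        case nx: True
        show ?thesis
        proof (cases "norm (y - x0) \<le> r")
          case True
          then show ?thesis using rho_near[OF nx] rho_near[OF True] psi_l[of x y] by simp
        next
          case False
          then show ?thesis using mixed[OF xy nx] by simp
        qed
      next
        case nx: False
        show ?thesis
        proof (cases "norm (y - x0) \<le> r")
          case True
          then show ?thesis using mixed[OF xy(2,1) True] nx
            by (simp add: norm_minus_commute abs_minus_commute)
        next
          case False
          have "hh x = 0" "hh y = 0" using nx False by (auto simp: hh_def)
          then have "psi x = 0" "psi y = 0" using psi_b[of x] psi_b[of y] by auto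
          then show ?thesis using fL[OF rho_in[OF xy(1)] rho_in[OF xy(2)]] rho_lip[of x y] by simp
        qed
      qed
      then show "dist (g x) (g y) \<le> 1 * dist x y" using gdiff[of x y] by (simp add: dist_norm)
    qed simp
    have close: "norm (g x - f x) \<le> \<epsilon>" if "x \<in> cbox 0 1" for x
    proof -
      have "g x - f x = (f (rho x) - f x) + psi x *\<^sub>R axis j 1" by (simp add: g_def)
      then have "norm (g x - f x) \<le> norm (f (rho x) - f x) + \<bar>psi x\<bar>"
        by (metis norm_triangle_ineq norm_scaleR norm_axis_1 mult.right_neutral real_norm_def)
      also have "\<dots> \<le> r + r" using fL[OF rho_in[OF that] that] rho_dist[of x] psi_b[of x] hh_le[of x] by linarith
      finally show ?thesis by (simp add: r_def)
    qed
    have eq: "g (a + t *\<^sub>R v) $ j = p t" if t: "t \<in> {t0 - r/4<..<t0 + r/4} \<inter> {0..1}" for t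
    proof -
      have t1: "t \<in> {0..1}" and t2: "t0 - r/4 < t" "t < t0 + r/4" using t by auto
      have tt: "\<bar>t - t0\<bar> < r / 4" using t2 by arith
      have d: "norm (a + t *\<^sub>R v - x0) = \<bar>t - t0\<bar>" using gd[of t t0] by (simp add: x0_def)
      have rn: "rho (a + t *\<^sub>R v) = x0" using d tt r0 by (intro rho_near) simp
      have hv: "hh (a + t *\<^sub>R v) = r - \<bar>t - t0\<bar>" using d tt r0 by (simp add: hh_def)
      have "\<bar>p t - p t0\<bar> \<le> \<bar>t - t0\<bar>" using pl[OF pP t1] t0 by simp
      then have "\<bar>p t - c\<bar> \<le> r - \<bar>t - t0\<bar>" using pt0 tt by linarith
      then have "psi (a + t *\<^sub>R v) = p t - c" unfolding psi_def hv pr_g[OF t1]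
        by (rule clamp_id)
      then show ?thesis by (simp add: g_def rn c_def)
    qed
    have r4: "r / 4 > 0" using r0 by simp
    have c1: "\<forall>x\<in>cbox 0 1. norm (g x - f x) \<le> \<epsilon>" using close by blast
    have c2: "\<forall>t\<in>{t0-r/4<..<t0+r/4} \<inter> {0..1}. g (a + t *\<^sub>R v) $ j = p t"
      using eq by blast
    have c3: "CARD('l) = 1 \<longrightarrow> (\<forall>t\<in>{0..1}. g (a + t *\<^sub>R v) $ j = p t)"
      using False by blast
    show ?thesis
      apply (rule bexI[OF _ pP])
      apply (rule exI[of _ "r/4"])
      apply (rule conjI[OF r4])
      apply (rule bexI[OF _ gLip])
      apply (intro conjI c1 c2 c3)
      done
  qed
qed

end
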